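(* Let $L$ be an $n\times n$ real matrix (not necessarily symmetric) with nonpositive off-diagonal entries, and let $E$ be the set of unordered pairs $\{i,j\}$, $i\ne j$, with $L_{ij}+L_{ji}<0$; assume the graph $G=(\{1,\dots,n\},E)$ is connected and that nodes $1,\dots,n_l$ ($1\le n_l<n$) are labeled with values $f(1),\dots,f(n_l)$. Consider the Harmonic Functions prediction: the minimizer $\vec f\in\mathbb R^n$ of $\sum_{i\neq j}-L_{ij}(f_i-f_j)^2$ subject to $f_i=f(i)$ for $i\le n_l$. Set edge costs $d_{ij}=-2/(L_{ij}+L_{ji})$ for $\{i,j\}\in E$. Then for every unlabeled node $p$, the flow-based prediction with $\lambda=0$ and these costs equals the Harmonic Functions value $f_p$.
   Context: Flow-based prediction: orient each edge of $G$ arbitrarily; let $A$ be the $n\times |E|$ signed incidence matrix ($A_{ie}=+1$, $A_{je}=-1$ for $e$ oriented from $i$ to $j$), $A_l$ its rows $1,\dots,n_l$ and $A_u$ its remaining rows. For unlabeled $p$, $\vec b_p\in\mathbb R^{n-n_l}$ is zero except $-1$ at the entry of $p$. For $\lambda\ge0$, $\vec x$ is the unique minimizer of $\frac12\sum_{e} d_e(x_e^2+\lambda|x_e|)$ subject to $A_u\vec x=\vec b_p$, the weights are $\vec w(p)=A_l\vec x$, and the prediction is $f(p)=\sum_{i=1}^{n_l}w_i(p)f(i)$. *)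

theory Defs
  imports Complex_Main
begin

text \<open>Nodes are 0,...,n-1 (paper: 1,...,n); labeled nodes are 0,...,nl-1.
  Matrices are functions nat => nat => real, vectors nat => real.\<close>

definition graph_edges :: "(nat \<Rightarrow> nat \<Rightarrow> real) \<Rightarrow> nat \<Rightarrow> (nat \<times> nat) set" where
  "graph_edges L n = {(i, j). i < j \<and> j < n \<and> L i j + L j i < 0}"

text \<open>Each unordered edge {i,j} with i<j is oriented from i to j.\<close>

definition graph_adj :: "(nat \<Rightarrow> nat \<Rightarrow> real) \<Rightarrow> nat \<Rightarrow> nat \<Rightarrow> nat \<Rightarrow> bool" where
  "graph_adj L n a b \<longleftrightarrow> (a, b) \<in> graph_edges L n \<or> (b, a) \<in> graph_edges L n"

definition graph_connected :: "(nat \<Rightarrow> nat \<Rightarrow> real) \<Rightarrow> nat \<Rightarrow> bool" where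
  "graph_connected L n \<longleftrightarrow> (\<forall>i j. i < n \<and> j < n \<longrightarrow> (graph_adj L n)\<^sup>*\<^sup>* i j)"

definition harm_obj :: "(nat \<Rightarrow> nat \<Rightarrow> real) \<Rightarrow> nat \<Rightarrow> (nat \<Rightarrow> real) \<Rightarrow> real" where
  "harm_obj L n f = (\<Sum>i<n. \<Sum>j<n. if i \<noteq> j then - L i j * (f i - f j)^2 else 0)"

text \<open>Vectors in R^n: functions vanishing outside {0..<n}.\<close>
definition harm_feasible :: "nat \<Rightarrow> nat \<Rightarrow> (nat \<Rightarrow> real) \<Rightarrow> (nat \<Rightarrow> real) \<Rightarrow> bool" where
  "harm_feasible n nl fl f \<longleftrightarrow> (\<forall>i<nl. f i = fl i) \<and> (\<forall>i. n \<le> i \<longrightarrow> f i = 0)"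

definition is_harmonic_min ::
  "(nat \<Rightarrow> nat \<Rightarrow> real) \<Rightarrow> nat \<Rightarrow> nat \<Rightarrow> (nat \<Rightarrow> real) \<Rightarrow> (nat \<Rightarrow> real) \<Rightarrow> bool" where
  "is_harmonic_min L n nl fl f \<longleftrightarrow> harm_feasible n nl fl f \<and>
     (\<forall>g. harm_feasible n nl fl g \<longrightarrow> harm_obj L n f \<le> harm_obj L n g)"

definition harmonic_solution ::
  "(nat \<Rightarrow> nat \<Rightarrow> real) \<Rightarrow> nat \<Rightarrow> nat \<Rightarrow> (nat \<Rightarrow> real) \<Rightarrow> (nat \<Rightarrow> real)" where
  "harmonic_solution L n nl fl = (THE f. is_harmonic_min L n nl fl f)"

definition incidence :: "nat \<Rightarrow> nat \<times> nat \<Rightarrow> real" where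
  "incidence k e = (if k = fst e then 1 else if k = snd e then -1 else 0)"

definition flow_obj ::
  "(nat \<times> nat) set \<Rightarrow> (nat \<times> nat \<Rightarrow> real) \<Rightarrow> real \<Rightarrow> (nat \<times> nat \<Rightarrow> real) \<Rightarrow> real" where
  "flow_obj E d lam x = (1/2) * (\<Sum>e\<in>E. d e * ((x e)^2 + lam * \<bar>x e\<bar>))"

text \<open>Flow vectors in R^{|E|}: functions vanishing outside E; constraint A_u x = b_p.\<close>
definition flow_feasible ::
  "(nat \<times> nat) set \<Rightarrow> nat \<Rightarrow> nat \<Rightarrow> nat \<Rightarrow> (nat \<times> nat \<Rightarrow> real) \<Rightarrow> bool" where
  "flow_feasible E n nl p x \<longleftrightarrow>
     (\<forall>k. nl \<le> k \<and> k < n \<longrightarrow> (\<Sum>e\<in>E. incidence k e * x e) = (if k = p then -1 else 0)) \<and>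
     (\<forall>e. e \<notin> E \<longrightarrow> x e = 0)"

definition is_flow_min ::
  "(nat \<times> nat) set \<Rightarrow> (nat \<times> nat \<Rightarrow> real) \<Rightarrow> real \<Rightarrow> nat \<Rightarrow> nat \<Rightarrow> nat \<Rightarrow> (nat \<times> nat \<Rightarrow> real) \<Rightarrow> bool" where
  "is_flow_min E d lam n nl p x \<longleftrightarrow> flow_feasible E n nl p x \<and>
     (\<forall>y. flow_feasible E n nl p y \<longrightarrow> flow_obj E d lam x \<le> flow_obj E d lam y)"

definition flow_solution ::
  "(nat \<times> nat) set \<Rightarrow> (nat \<times> nat \<Rightarrow> real) \<Rightarrow> real \<Rightarrow> nat \<Rightarrow> nat \<Rightarrow> nat \<Rightarrow> (nat \<times> nat \<Rightarrow> real)" where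
  "flow_solution E d lam n nl p = (THE x. is_flow_min E d lam n nl p x)"

definition flow_weight ::
  "(nat \<times> nat) set \<Rightarrow> (nat \<times> nat \<Rightarrow> real) \<Rightarrow> real \<Rightarrow> nat \<Rightarrow> nat \<Rightarrow> nat \<Rightarrow> nat \<Rightarrow> real" where
  "flow_weight E d lam n nl p i = (\<Sum>e\<in>E. incidence i e * flow_solution E d lam n nl p e)"

definition flow_prediction ::
  "(nat \<times> nat) set \<Rightarrow> (nat \<times> nat \<Rightarrow> real) \<Rightarrow> real \<Rightarrow> nat \<Rightarrow> nat \<Rightarrow> (nat \<Rightarrow> real) \<Rightarrow> nat \<Rightarrow> real" where
  "flow_prediction E d lam n nl fl p = (\<Sum>i<nl. flow_weight E d lam n nl p i * fl i)"

definition edge_cost :: "(nat \<Rightarrow> nat \<Rightarrow> real) \<Rightarrow> nat \<times> nat \<Rightarrow> real" where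
  "edge_cost L e = -2 / (L (fst e) (snd e) + L (snd e) (fst e))"

end

theory Submission imports Defs "Jordan_Normal_Form.Determinant" begin

definition we :: "(nat \<Rightarrow> nat \<Rightarrow> real) \<Rightarrow> nat \<times> nat \<Rightarrow> real" where
  "we L e = - (L (fst e) (snd e) + L (snd e) (fst e))"
definition Ax :: "(nat \<times> nat) set \<Rightarrow> (nat \<times> nat \<Rightarrow> real) \<Rightarrow> nat \<Rightarrow> real" where
  "Ax E x k = (\<Sum>e\<in>E. incidence k e * x e)"
definition grad :: "(nat \<Rightarrow> nat \<Rightarrow> real) \<Rightarrow> (nat \<Rightarrow> real) \<Rightarrow> nat \<times> nat \<Rightarrow> real" where
  "grad L \<phi> e = we L e * (\<phi> (fst e) - \<phi> (snd e))"
definition dl :: "nat \<Rightarrow> nat \<Rightarrow> real" where "dl j i = (if i = j then 1 else 0)"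

lemma sum_split_nat:
  assumes "nl \<le> (n::nat)"
  shows "(\<Sum>j<n. F j) = (\<Sum>j<nl. F j) + (\<Sum>l<n-nl. F (nl+l))"
proof -
  have "(\<Sum>j<n. F j) = (\<Sum>j\<in>{0..<nl}. F j) + (\<Sum>j\<in>{nl..<n}. F j)"
    using assms by (simp add: lessThan_atLeast0 sum.atLeastLessThan_concat)
  also have "(\<Sum>j\<in>{nl..<n}. F j) = (\<Sum>l<n-nl. F (nl+l))"
    by (subst sum.atLeastLessThan_shift_0) (simp add: lessThan_atLeast0 comp_def)
  finally show ?thesis by (simp add: lessThan_atLeast0)
qed

lemma E_props:
  assumes "e \<in> graph_edges L n"
  shows "fst e < snd e" "snd e < n" "fst e < n" "we L e > 0"
  using assms by (auto simp: graph_edges_def we_def)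

lemma E_finite: "finite (graph_edges L n)"
proof -
  have "graph_edges L n \<subseteq> {..<n} \<times> {..<n}" by (auto simp: graph_edges_def)
  thus ?thesis by (rule finite_subset) auto
qed

lemma incid_sum:
  assumes "a < n" "b < n" "a \<noteq> b"
  shows "(\<Sum>k<n. \<phi> k * (incidence k (a,b) * c)) = c * (\<phi> a - \<phi> b)"
proof -
  have "(\<Sum>k<n. \<phi> k * (incidence k (a,b) * c)) =
        (\<Sum>k<n. (if k = a then \<phi> k * c else 0) + (if k = b then - (\<phi> k * c) else 0))"
    by (rule sum.cong) (auto simp: incidence_def assms)
  also have "\<dots> = \<phi> a * c - \<phi> b * c"
    using assms by (simp add: sum.distrib)
  finally show ?thesis by (simp add: algebra_simps)
qed

lemma green:
  "(\<Sum>k<n. \<phi> k * Ax (graph_edges L n) x k) =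
   (\<Sum>e\<in>graph_edges L n. x e * (\<phi> (fst e) - \<phi> (snd e)))"
proof -
  have "(\<Sum>k<n. \<phi> k * Ax (graph_edges L n) x k) =
        (\<Sum>e\<in>graph_edges L n. \<Sum>k<n. \<phi> k * (incidence k e * x e))"
    unfolding Ax_def sum_distrib_left by (rule sum.swap)
  also have "\<dots> = (\<Sum>e\<in>graph_edges L n. x e * (\<phi> (fst e) - \<phi> (snd e)))"
  proof (rule sum.cong[OF refl])
    fix e assume e: "e \<in> graph_edges L n"
    obtain a b where ab: "e = (a,b)" by (cases e)
    show "(\<Sum>k<n. \<phi> k * (incidence k e * x e)) = x e * (\<phi> (fst e) - \<phi> (snd e))"
      using E_props[OF e] incid_sum[of a n b \<phi> "x (a,b)"] unfolding ab by simp
  qed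
  finally show ?thesis .
qed

lemma sum_dl: "a < (n::nat) \<Longrightarrow> (\<Sum>j<n. \<phi> j * (if a = j then 1 else 0)) = (\<phi> a::real)"
proof -
  assume a: "a < n"
  have "(\<Sum>j<n. \<phi> j * (if a = j then 1 else 0)) = (\<Sum>j<n. if a = j then \<phi> j else 0)"
    by (rule sum.cong) auto
  also have "\<dots> = \<phi> a" using a by (subst sum.delta') auto
  finally show ?thesis .
qed

lemma lap_lin:
  "Ax (graph_edges L n) (grad L \<phi>) k = (\<Sum>j<n. \<phi> j * Ax (graph_edges L n) (grad L (dl j)) k)"
proof -
  have "(\<Sum>j<n. \<phi> j * Ax (graph_edges L n) (grad L (dl j)) k) =
     (\<Sum>j<n. \<Sum>e\<in>graph_edges L n. \<phi> j * (incidence k e * (we L e * (dl j (fst e) - dl j (snd e)))))"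
    unfolding Ax_def grad_def by (simp add: sum_distrib_left)
  also have "\<dots> = (\<Sum>e\<in>graph_edges L n. \<Sum>j<n. \<phi> j * (incidence k e * (we L e * (dl j (fst e) - dl j (snd e)))))"
    by (rule sum.swap)
  also have "\<dots> = (\<Sum>e\<in>graph_edges L n. incidence k e * we L e * (\<Sum>j<n. \<phi> j * (dl j (fst e) - dl j (snd e))))"
    by (simp add: sum_distrib_left mult_ac)
  also have "\<dots> = (\<Sum>e\<in>graph_edges L n. incidence k e * we L e * (\<phi> (fst e) - \<phi> (snd e)))"
  proof (rule sum.cong[OF refl])
    fix e assume e: "e \<in> graph_edges L n"
    have "(\<Sum>j<n. \<phi> j * (dl j (fst e) - dl j (snd e))) = \<phi> (fst e) - \<phi> (snd e)"
      using E_props[OF e] by (simp add: dl_def right_diff_distrib sum_subtractf sum_dl)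
    thus "incidence k e * we L e * (\<Sum>j<n. \<phi> j * (dl j (fst e) - dl j (snd e))) =
          incidence k e * we L e * (\<phi> (fst e) - \<phi> (snd e))" by simp
  qed
  finally show ?thesis unfolding Ax_def grad_def by (simp add: mult.assoc)
qed

lemma conn_zero:
  assumes conn: "graph_connected L n" and n0: "0 < n"
    and eq: "\<forall>e\<in>graph_edges L n. d (fst e) = d (snd e)" and d0: "d 0 = (0::real)"
    and j: "j < n"
  shows "d j = 0"
proof -
  have "(graph_adj L n)\<^sup>*\<^sup>* 0 j" using conn n0 j by (auto simp: graph_connected_def)
  thus ?thesis
  proof (induction rule: rtranclp_induct)
    case base then show ?case using d0 .
  next
    case (step a b)
    have "d a = d b"
      using step(2) eq unfolding graph_adj_def by (metis fst_conv snd_conv)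
    thus ?case using step(3) by simp
  qed
qed

lemma energy_zero:
  assumes "(\<Sum>e\<in>graph_edges L n. we L e * (d (fst e) - d (snd e))^2) = (0::real)"
  shows "\<forall>e\<in>graph_edges L n. d (fst e) = d (snd e)"
proof
  fix e assume e: "e \<in> graph_edges L n"
  have "\<forall>e\<in>graph_edges L n. we L e * (d (fst e) - d (snd e))^2 = 0"
    using assms by (subst sum_nonneg_eq_0_iff[symmetric])
      (auto simp: E_finite intro!: mult_nonneg_nonneg less_imp_le[OF E_props(4)])
  with e E_props(4)[OF e] show "d (fst e) = d (snd e)" by auto
qed

lemma zero_lemma:
  assumes conn: "graph_connected L n" and nl: "0 < nl" "nl \<le> n"
    and d0: "\<forall>i<nl. d i = 0"
    and lap: "\<forall>k. nl \<le> k \<and> k < n \<longrightarrow> Ax (graph_edges L n) (grad L d) k = 0"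
    and j: "j < n"
  shows "d j = (0::real)"
proof -
  have "(\<Sum>k<n. d k * Ax (graph_edges L n) (grad L d) k) = 0"
  proof (rule sum.neutral, intro ballI)
    fix k assume "k \<in> {..<n}"
    then show "d k * Ax (graph_edges L n) (grad L d) k = 0" using d0 lap by (cases "k < nl") auto
  qed
  hence "(\<Sum>e\<in>graph_edges L n. we L e * (d (fst e) - d (snd e))^2) = 0"
    unfolding green grad_def by (simp add: power2_eq_square mult.assoc)
  from energy_zero[OF this] have eq: "\<forall>e\<in>graph_edges L n. d (fst e) = d (snd e)" .
  show ?thesis by (rule conn_zero[OF conn _ eq _ j]) (use nl d0 in auto)
qed

lemma solve_inj:
  fixes A :: "real mat"
  assumes A: "A \<in> carrier_mat m m"
    and inj: "\<And>v. v \<in> carrier_vec m \<Longrightarrow> A *\<^sub>v v = 0\<^sub>v m \<Longrightarrow> v = 0\<^sub>v m"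
    and b: "b \<in> carrier_vec m"
  shows "\<exists>x\<in>carrier_vec m. A *\<^sub>v x = b"
proof -
  have "det A \<noteq> 0" using det_0_iff_vec_prod_zero_field[OF A] inj by auto
  from det_non_zero_imp_unit[OF A this, of "()"]
  obtain B where B: "B \<in> carrier_mat m m" "A * B = 1\<^sub>m m"
    by (auto simp: ring_mat_def Units_def)
  have "A *\<^sub>v (B *\<^sub>v b) = (A * B) *\<^sub>v b" using A B b by (simp add: assoc_mult_mat_vec[symmetric])
  also have "\<dots> = b" using B b by simp
  finally show ?thesis using B b by (intro bexI[of _ "B *\<^sub>v b"]) auto
qed

lemma lap_split:
  assumes "nl \<le> n" "\<forall>i. n \<le> i \<longrightarrow> u i = 0"
  shows "Ax (graph_edges L n) (grad L u) k =
     (\<Sum>j<nl. u j * Ax (graph_edges L n) (grad L (dl j)) k) +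
     (\<Sum>l<n-nl. u (nl+l) * Ax (graph_edges L n) (grad L (dl (nl+l))) k)"
  by (subst lap_lin) (rule sum_split_nat[OF assms(1)])

lemma dirichlet:
  assumes conn: "graph_connected L n" and nl: "0 < nl" "nl \<le> n"
  shows "\<exists>u. (\<forall>i<nl. u i = g i) \<and> (\<forall>i. n \<le> i \<longrightarrow> u i = 0) \<and>
             (\<forall>k. nl \<le> k \<and> k < n \<longrightarrow> Ax (graph_edges L n) (grad L u) k = h k)"
proof -
  define m where "m = n - nl"
  define c where "c j k = Ax (graph_edges L n) (grad L (dl j)) k" for j k
  define M where "M = mat m m (\<lambda>(k,l). c (nl+l) (nl+k))"
  have M: "M \<in> carrier_mat m m" by (simp add: M_def)
  have Mv: "(M *\<^sub>v v) $ k = (\<Sum>l<m. v $ l * c (nl+l) (nl+k))"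
    if "v \<in> carrier_vec m" "k < m" for v k
    using that by (simp add: M_def scalar_prod_def lessThan_atLeast0 mult.commute)
  have inj: "v = 0\<^sub>v m" if v: "v \<in> carrier_vec m" and Mv0: "M *\<^sub>v v = 0\<^sub>v m" for v
  proof -
    define u where "u i = (if nl \<le> i \<and> i < n then v $ (i - nl) else 0)" for i
    have lap: "\<forall>k. nl \<le> k \<and> k < n \<longrightarrow> Ax (graph_edges L n) (grad L u) k = 0"
    proof (intro allI impI)
      fix k assume k: "nl \<le> k \<and> k < n"
      have "Ax (graph_edges L n) (grad L u) k =
            (\<Sum>j<nl. u j * c j k) + (\<Sum>l<m. u (nl+l) * c (nl+l) k)"
        unfolding c_def m_def by (rule lap_split) (use nl in \<open>auto simp: u_def\<close>)
      also have "(\<Sum>j<nl. u j * c j k) = 0" by (simp add: u_def)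
      also have "(\<Sum>l<m. u (nl+l) * c (nl+l) k) = (\<Sum>l<m. v $ l * c (nl+l) (nl+(k-nl)))"
        using k by (intro sum.cong) (auto simp: u_def m_def)
      also have "\<dots> = (M *\<^sub>v v) $ (k - nl)" by (subst Mv[OF v]) (use k in \<open>auto simp: m_def\<close>)
      also have "\<dots> = 0"
      proof -
        have km: "k - nl < m" using k unfolding m_def by linarith
        show ?thesis using Mv0 km by simp
      qed
      finally show "Ax (graph_edges L n) (grad L u) k = 0" by simp
    qed
    show ?thesis
    proof (rule eq_vecI)
      fix i assume "i < dim_vec (0\<^sub>v m :: real vec)"
      hence i: "i < m" by simp
      have "u (nl + i) = 0"
        by (rule zero_lemma[OF conn nl _ lap]) (use i in \<open>auto simp: u_def m_def\<close>)
      moreover have ni: "nl + i < n" using i unfolding m_def by linarith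
      ultimately show "v $ i = 0\<^sub>v m $ i" using i by (simp add: u_def)
    qed (use v in auto)
  qed
  define b where "b = vec m (\<lambda>k. h (nl+k) - (\<Sum>j<nl. g j * c j (nl+k)))"
  obtain x where x: "x \<in> carrier_vec m" "M *\<^sub>v x = b"
    using solve_inj[OF M inj, of b] by (auto simp: b_def)
  define u where "u i = (if i < nl then g i else if i < n then x $ (i - nl) else 0)" for i
  have "Ax (graph_edges L n) (grad L u) k = h k" if k: "nl \<le> k" "k < n" for k
  proof -
    have "Ax (graph_edges L n) (grad L u) k =
          (\<Sum>j<nl. u j * c j k) + (\<Sum>l<m. u (nl+l) * c (nl+l) k)"
      unfolding c_def m_def by (rule lap_split) (use nl in \<open>auto simp: u_def\<close>)
    also have "(\<Sum>j<nl. u j * c j k) = (\<Sum>j<nl. g j * c j (nl + (k-nl)))"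
      using k by (simp add: u_def)
    also have "(\<Sum>l<m. u (nl+l) * c (nl+l) k) = (\<Sum>l<m. x $ l * c (nl+l) (nl+(k-nl)))"
      using k by (intro sum.cong) (auto simp: u_def m_def)
    also have "\<dots> = (M *\<^sub>v x) $ (k - nl)" by (subst Mv[OF x(1)]) (use k in \<open>auto simp: m_def\<close>)
    also have "\<dots> = b $ (k - nl)" using x by simp
    finally show ?thesis using k by (simp add: b_def m_def)
  qed
  moreover have "\<forall>i<nl. u i = g i" by (simp add: u_def)
  moreover have "\<forall>i. n \<le> i \<longrightarrow> u i = 0" using nl by (simp add: u_def)
  ultimately show ?thesis by blast
qed


lemma harm_edge:
  assumes offdiag: "\<forall>i j. i < n \<and> j < n \<and> i \<noteq> j \<longrightarrow> L i j \<le> 0"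
  shows "harm_obj L n f = (\<Sum>e\<in>graph_edges L n. we L e * (f (fst e) - f (snd e))^2)"
proof -
  define s where "s i j = (f i - f j)^2" for i j
  have sym: "s j i = s i j" for i j by (simp add: s_def power2_commute)
  have "harm_obj L n f = (\<Sum>i<n. \<Sum>j<n. (if i < j then - L i j * s i j else 0) + (if j < i then - L i j * s i j else 0))"
    unfolding harm_obj_def s_def by (intro sum.cong refl) auto
  also have "\<dots> = (\<Sum>i<n. \<Sum>j<n. if i < j then - L i j * s i j else 0) + (\<Sum>i<n. \<Sum>j<n. if j < i then - L i j * s i j else 0)"
    by (simp add: sum.distrib)
  also have "(\<Sum>i<n. \<Sum>j<n. if j < i then - L i j * s i j else 0) = (\<Sum>i<n. \<Sum>j<n. if i < j then - L j i * s j i else 0)"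
    by (rule sum.swap)
  also have "(\<Sum>i<n. \<Sum>j<n. if i < j then - L i j * s i j else 0) + (\<Sum>i<n. \<Sum>j<n. if i < j then - L j i * s j i else 0)
      = (\<Sum>i<n. \<Sum>j<n. if i < j then we L (i,j) * s i j else 0)"
    by (simp add: sum.distrib[symmetric] we_def sym algebra_simps if_distrib cong: if_cong)
  also have "\<dots> = (\<Sum>(i,j)\<in>{..<n}\<times>{..<n}. if i < j then we L (i,j) * s i j else 0)"
    by (rule sum.cartesian_product)
  also have "\<dots> = (\<Sum>e\<in>graph_edges L n. we L e * (f (fst e) - f (snd e))^2)"
  proof (rule sum.mono_neutral_cong_right)
    show "graph_edges L n \<subseteq> {..<n}\<times>{..<n}" by (auto simp: graph_edges_def)
    show "\<forall>e\<in>{..<n}\<times>{..<n} - graph_edges L n. (case e of (i,j) \<Rightarrow> if i < j then we L (i,j) * s i j else 0) = 0"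
    proof
      fix e assume e: "e \<in> {..<n}\<times>{..<n} - graph_edges L n"
      obtain i j where ij: "e = (i,j)" by (cases e)
      show "(case e of (i,j) \<Rightarrow> if i < j then we L (i,j) * s i j else 0) = 0"
      proof (cases "i < j")
        case True
        with e ij have "\<not> (L i j + L j i < 0)" "i < n" "j < n" by (auto simp: graph_edges_def)
        moreover have "L i j \<le> 0" "L j i \<le> 0" using offdiag \<open>i<n\<close> \<open>j<n\<close> True by auto
        ultimately have "we L (i,j) = 0" by (simp add: we_def)
        thus ?thesis by (simp add: ij)
      qed (simp add: ij)
    qed
    show "\<And>e. e \<in> graph_edges L n \<Longrightarrow> (case e of (i,j) \<Rightarrow> if i < j then we L (i,j) * s i j else 0) = we L e * (f (fst e) - f (snd e))^2"
      by (auto simp: graph_edges_def s_def)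
  qed simp
  finally show ?thesis .
qed

lemma Ax_diff: "Ax E (\<lambda>e. y e - x e) k = Ax E y k - Ax E x k"
  unfolding Ax_def by (simp add: right_diff_distrib sum_subtractf)

lemma green_sym:
  "(\<Sum>e\<in>graph_edges L n. grad L u e * (\<phi> (fst e) - \<phi> (snd e))) = (\<Sum>k<n. \<phi> k * Ax (graph_edges L n) (grad L u) k)"
  by (rule green[symmetric])

lemma decomp:
  assumes nl: "nl \<le> n"
    and harm: "\<forall>k. nl \<le> k \<and> k < n \<longrightarrow> Ax (graph_edges L n) (grad L u) k = 0"
    and d0: "\<forall>i<nl. d i = 0"
  shows "(\<Sum>e\<in>graph_edges L n. we L e * ((u (fst e) + d (fst e)) - (u (snd e) + d (snd e)))^2) =
         (\<Sum>e\<in>graph_edges L n. we L e * (u (fst e) - u (snd e))^2) +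
         (\<Sum>e\<in>graph_edges L n. we L e * (d (fst e) - d (snd e))^2)"
proof -
  have cross: "(\<Sum>e\<in>graph_edges L n. grad L u e * (d (fst e) - d (snd e))) = 0"
    unfolding green_sym
  proof (rule sum.neutral, intro ballI)
    fix k assume "k \<in> {..<n}"
    then show "d k * Ax (graph_edges L n) (grad L u) k = 0" using d0 harm by (cases "k < nl") auto
  qed
  have "(\<Sum>e\<in>graph_edges L n. we L e * ((u (fst e) + d (fst e)) - (u (snd e) + d (snd e)))^2) =
        (\<Sum>e\<in>graph_edges L n. we L e * (u (fst e) - u (snd e))^2 + we L e * (d (fst e) - d (snd e))^2
           + 2 * (grad L u e * (d (fst e) - d (snd e))))"
    by (intro sum.cong refl) (simp add: grad_def power2_eq_square algebra_simps)
  also have "\<dots> = (\<Sum>e\<in>graph_edges L n. we L e * (u (fst e) - u (snd e))^2) +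
         (\<Sum>e\<in>graph_edges L n. we L e * (d (fst e) - d (snd e))^2) +
         2 * (\<Sum>e\<in>graph_edges L n. grad L u e * (d (fst e) - d (snd e)))"
    by (simp add: sum.distrib sum_distrib_left)
  finally show ?thesis using cross by simp
qed

lemma Q_nonneg: "(\<Sum>e\<in>graph_edges L n. we L e * (d (fst e) - d (snd e))^2) \<ge> (0::real)"
  by (intro sum_nonneg mult_nonneg_nonneg less_imp_le[OF E_props(4)]) auto


lemma harm_part:
  assumes offdiag: "\<forall>i j. i < n \<and> j < n \<and> i \<noteq> j \<longrightarrow> L i j \<le> 0"
    and conn: "graph_connected L n" and nl: "0 < nl" "nl \<le> n"
    and u1: "\<forall>i<nl. u i = fl i" and u2: "\<forall>i. n \<le> i \<longrightarrow> u i = 0"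
    and u3: "\<forall>k. nl \<le> k \<and> k < n \<longrightarrow> Ax (graph_edges L n) (grad L u) k = 0"
  shows "is_harmonic_min L n nl fl u" "\<And>f. is_harmonic_min L n nl fl f \<Longrightarrow> f = u"
proof -
  have key: "harm_obj L n g = harm_obj L n u + (\<Sum>e\<in>graph_edges L n. we L e * ((\<lambda>i. g i - u i) (fst e) - (\<lambda>i. g i - u i) (snd e))^2)"
    if g: "harm_feasible n nl fl g" for g
  proof -
    define d where "d i = g i - u i" for i
    have d0: "\<forall>i<nl. d i = 0" using g u1 by (simp add: d_def harm_feasible_def)
    have "harm_obj L n g = (\<Sum>e\<in>graph_edges L n. we L e * ((u (fst e) + d (fst e)) - (u (snd e) + d (snd e)))^2)"
      by (simp add: harm_edge[OF offdiag] d_def)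
    also have "\<dots> = harm_obj L n u + (\<Sum>e\<in>graph_edges L n. we L e * (d (fst e) - d (snd e))^2)"
      by (simp add: decomp[OF nl(2) u3 d0] harm_edge[OF offdiag])
    finally show ?thesis by (simp add: d_def)
  qed
  have uf: "harm_feasible n nl fl u" using u1 u2 by (simp add: harm_feasible_def)
  show "is_harmonic_min L n nl fl u"
    unfolding is_harmonic_min_def
  proof (intro conjI allI impI uf)
    fix g assume g: "harm_feasible n nl fl g"
    show "harm_obj L n u \<le> harm_obj L n g"
      using key[OF g] Q_nonneg[where L=L and n=n and d="\<lambda>i. g i - u i"] by linarith
  qed
  fix f assume f: "is_harmonic_min L n nl fl f"
  hence ff: "harm_feasible n nl fl f" and le: "harm_obj L n f \<le> harm_obj L n u"
    using uf by (auto simp: is_harmonic_min_def)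
  define d where "d i = f i - u i" for i
  have "(\<Sum>e\<in>graph_edges L n. we L e * (d (fst e) - d (snd e))^2) = 0"
    using key[OF ff] le Q_nonneg[where L=L and n=n and d=d] unfolding d_def by linarith
  from energy_zero[OF this] have eq: "\<forall>e\<in>graph_edges L n. d (fst e) = d (snd e)" .
  have "d i = 0" for i
  proof (cases "i < n")
    case True
    show ?thesis by (rule conn_zero[OF conn _ eq _ True]) (use nl ff u1 in \<open>auto simp: d_def harm_feasible_def\<close>)
  next
    case False
    thus ?thesis using ff u2 by (simp add: d_def harm_feasible_def)
  qed
  thus "f = u" by (auto simp: d_def)
qed


lemma ec_pos: "e \<in> graph_edges L n \<Longrightarrow> edge_cost L e > 0"
  by (auto simp: graph_edges_def edge_cost_def divide_neg_neg)

lemma ec_grad: "e \<in> graph_edges L n \<Longrightarrow> edge_cost L e * grad L mu e = 2 * (mu (fst e) - mu (snd e))"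
  by (auto simp: graph_edges_def edge_cost_def grad_def we_def field_simps)

lemma flow_part:
  assumes nl: "nl \<le> n"
    and m1: "\<forall>i<nl. mu i = 0"
    and m3: "\<forall>k. nl \<le> k \<and> k < n \<longrightarrow> Ax (graph_edges L n) (grad L mu) k = (if k = p then -1 else 0)"
    and xs: "xs = (\<lambda>e. if e \<in> graph_edges L n then grad L mu e else 0)"
  shows "is_flow_min (graph_edges L n) (edge_cost L) 0 n nl p xs"
        "\<And>y. is_flow_min (graph_edges L n) (edge_cost L) 0 n nl p y \<Longrightarrow> y = xs"
proof -
  let ?E = "graph_edges L n"
  have Axs: "Ax ?E xs k = Ax ?E (grad L mu) k" for k
    unfolding Ax_def xs by (intro sum.cong) auto
  have xf: "flow_feasible ?E n nl p xs"
    using m3 unfolding flow_feasible_def Axs[unfolded Ax_def, symmetric] by (auto simp: Ax_def xs)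
  have key: "flow_obj ?E (edge_cost L) 0 y = flow_obj ?E (edge_cost L) 0 xs +
     (1/2) * (\<Sum>e\<in>?E. edge_cost L e * (y e - xs e)^2)" if y: "flow_feasible ?E n nl p y" for y
  proof -
    define z where "z e = y e - xs e" for e
    have Az: "Ax ?E z k = 0" if "nl \<le> k" "k < n" for k
      using that y xf unfolding z_def Ax_diff by (simp add: flow_feasible_def Ax_def)
    have cross: "(\<Sum>e\<in>?E. edge_cost L e * xs e * z e) = 0"
    proof -
      have "(\<Sum>e\<in>?E. edge_cost L e * xs e * z e) = 2 * (\<Sum>e\<in>?E. z e * (mu (fst e) - mu (snd e)))"
        unfolding sum_distrib_left by (intro sum.cong refl) (simp add: xs ec_grad)
      also have "(\<Sum>e\<in>?E. z e * (mu (fst e) - mu (snd e))) = (\<Sum>k<n. mu k * Ax ?E z k)"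
        by (rule green[symmetric])
      also have "\<dots> = 0"
      proof (rule sum.neutral, intro ballI)
        fix k assume "k \<in> {..<n}"
        then show "mu k * Ax ?E z k = 0" using m1 Az by (cases "k < nl") auto
      qed
      finally show ?thesis by simp
    qed
    have "flow_obj ?E (edge_cost L) 0 y = (1/2) * (\<Sum>e\<in>?E. edge_cost L e * (xs e)^2 + edge_cost L e * (z e)^2 + 2 * (edge_cost L e * xs e * z e))"
      unfolding flow_obj_def by (simp add: z_def power2_eq_square algebra_simps)
    also have "\<dots> = flow_obj ?E (edge_cost L) 0 xs + (1/2) * (\<Sum>e\<in>?E. edge_cost L e * (z e)^2)"
    proof -
      have "(\<Sum>e\<in>?E. edge_cost L e * (xs e)^2 + edge_cost L e * (z e)^2 + 2 * (edge_cost L e * xs e * z e))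
          = (\<Sum>e\<in>?E. edge_cost L e * (xs e)^2) + (\<Sum>e\<in>?E. edge_cost L e * (z e)^2) + 2 * (\<Sum>e\<in>?E. edge_cost L e * xs e * z e)"
        by (simp add: sum.distrib sum_distrib_left)
      thus ?thesis unfolding flow_obj_def using cross by (simp add: algebra_simps)
    qed
    finally show ?thesis by (simp add: z_def)
  qed
  have nonneg: "(\<Sum>e\<in>?E. edge_cost L e * (w e)^2) \<ge> 0" for w
    by (intro sum_nonneg mult_nonneg_nonneg less_imp_le[OF ec_pos]) auto
  show "is_flow_min ?E (edge_cost L) 0 n nl p xs"
    unfolding is_flow_min_def
  proof (intro conjI allI impI xf)
    fix y assume y: "flow_feasible ?E n nl p y"
    show "flow_obj ?E (edge_cost L) 0 xs \<le> flow_obj ?E (edge_cost L) 0 y"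
      using key[OF y] nonneg[of "\<lambda>e. y e - xs e"] by linarith
  qed
  fix y assume ym: "is_flow_min ?E (edge_cost L) 0 n nl p y"
  hence yf: "flow_feasible ?E n nl p y" and le: "flow_obj ?E (edge_cost L) 0 y \<le> flow_obj ?E (edge_cost L) 0 xs"
    using xf by (auto simp: is_flow_min_def)
  have z0: "(\<Sum>e\<in>?E. edge_cost L e * (y e - xs e)^2) = 0"
    using key[OF yf] le nonneg[of "\<lambda>e. y e - xs e"] by linarith
  have "\<forall>e\<in>?E. edge_cost L e * (y e - xs e)^2 = 0"
    using z0 by (subst sum_nonneg_eq_0_iff[symmetric])
      (auto simp: E_finite intro!: mult_nonneg_nonneg less_imp_le[OF ec_pos])
  moreover have off: "\<forall>e. e \<notin> ?E \<longrightarrow> y e = 0" using yf unfolding flow_feasible_def by (rule conjunct2)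
  ultimately have "y e = xs e" for e
  proof (cases "e \<in> ?E")
    case True
    with \<open>\<forall>e\<in>?E. edge_cost L e * (y e - xs e)^2 = 0\<close> ec_pos[of e L n] show ?thesis by auto
  next
    case False
    hence "y e = 0" using off by blast
    thus ?thesis using False by (simp add: xs)
  qed
  thus "y = xs" by auto
qed


theorem mainTheorem2:
  fixes L :: "nat \<Rightarrow> nat \<Rightarrow> real" and n nl :: nat and fl :: "nat \<Rightarrow> real" and p :: nat
  assumes offdiag: "\<forall>i j. i < n \<and> j < n \<and> i \<noteq> j \<longrightarrow> L i j \<le> 0"
    and conn: "graph_connected L n"
    and nl: "1 \<le> nl" "nl < n"
    and p: "nl \<le> p" "p < n"
  shows "(\<exists>!f. is_harmonic_min L n nl fl f)
       \<and> (\<exists>!x. is_flow_min (graph_edges L n) (edge_cost L) 0 n nl p x)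
       \<and> flow_prediction (graph_edges L n) (edge_cost L) 0 n nl fl p = harmonic_solution L n nl fl p"
proof -
  let ?E = "graph_edges L n"
  have nl0: "0 < nl" and nln: "nl \<le> n" using nl by auto
  obtain u where u1: "\<forall>i<nl. u i = fl i" and u2: "\<forall>i. n \<le> i \<longrightarrow> u i = 0"
    and u3: "\<forall>k. nl \<le> k \<and> k < n \<longrightarrow> Ax ?E (grad L u) k = 0"
    using dirichlet[OF conn nl0 nln, of fl "\<lambda>_. 0"] by blast
  obtain mu where m1: "\<forall>i<nl. mu i = 0"
    and m3: "\<forall>k. nl \<le> k \<and> k < n \<longrightarrow> Ax ?E (grad L mu) k = (if k = p then -1 else 0)"
    using dirichlet[OF conn nl0 nln, of "\<lambda>_. 0" "\<lambda>k. if k = p then -1 else 0"] by blast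
  define xs where "xs = (\<lambda>e. if e \<in> ?E then grad L mu e else 0)"
  note H = harm_part[OF offdiag conn nl0 nln u1 u2 u3]
  note F = flow_part[OF nln m1 m3 xs_def]
  have ex1h: "\<exists>!f. is_harmonic_min L n nl fl f" using H by blast
  have ex1f: "\<exists>!x. is_flow_min ?E (edge_cost L) 0 n nl p x" using F by blast
  have hs: "harmonic_solution L n nl fl = u"
    unfolding harmonic_solution_def using H by (rule the_equality)
  have fs: "flow_solution ?E (edge_cost L) 0 n nl p = xs"
    unfolding flow_solution_def using F by (rule the_equality)
  have Axs: "Ax ?E xs k = Ax ?E (grad L mu) k" for k
    unfolding Ax_def xs_def by (intro sum.cong) auto
  have "(\<Sum>k<n. u k * Ax ?E xs k) = (\<Sum>e\<in>?E. xs e * (u (fst e) - u (snd e)))"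
    by (rule green)
  also have "\<dots> = (\<Sum>e\<in>?E. grad L u e * (mu (fst e) - mu (snd e)))"
    by (intro sum.cong refl) (simp add: xs_def grad_def)
  also have "\<dots> = (\<Sum>k<n. mu k * Ax ?E (grad L u) k)"
    by (rule green[symmetric])
  also have "\<dots> = 0"
  proof (rule sum.neutral, intro ballI)
    fix k assume "k \<in> {..<n}"
    then show "mu k * Ax ?E (grad L u) k = 0" using m1 u3 by (cases "k < nl") auto
  qed
  finally have S0: "(\<Sum>k<n. u k * Ax ?E xs k) = 0" .
  have "(\<Sum>k<n. u k * Ax ?E xs k) = (\<Sum>j<nl. u j * Ax ?E xs j) + (\<Sum>l<n-nl. u (nl+l) * Ax ?E xs (nl+l))"
    by (rule sum_split_nat[OF nln])
  also have "(\<Sum>l<n-nl. u (nl+l) * Ax ?E xs (nl+l)) = (\<Sum>l<n-nl. if l = p - nl then - u (nl+l) else 0)"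
  proof (intro sum.cong refl)
    fix l assume "l \<in> {..<n-nl}"
    hence "nl \<le> nl + l" "nl + l < n" by auto
    hence "Ax ?E xs (nl+l) = (if nl + l = p then -1 else 0)" using m3 Axs by simp
    moreover have "(nl + l = p) = (l = p - nl)" using p by auto
    ultimately show "u (nl+l) * Ax ?E xs (nl+l) = (if l = p - nl then - u (nl+l) else 0)" by simp
  qed
  also have "\<dots> = - u p"
  proof -
    have "p - nl < n - nl" using p by linarith
    thus ?thesis using p by simp
  qed
  finally have "(\<Sum>j<nl. u j * Ax ?E xs j) = u p" using S0 by simp
  moreover have "flow_prediction ?E (edge_cost L) 0 n nl fl p = (\<Sum>j<nl. u j * Ax ?E xs j)"
    unfolding flow_prediction_def flow_weight_def fs
    by (intro sum.cong refl) (simp add: u1 Ax_def mult.commute)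
  ultimately show ?thesis using ex1h ex1f hs by simp
qed

end
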